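(* Let $a_1,\ldots,a_k\in\mathbb R^d$ be orthonormal vectors and $u_1,\ldots,u_k\in\mathbb R^d$ unit vectors with $\|u_i-a_i\|_2^2\le\epsilon$ for all $i$. Let $U$ be the $d\times k$ matrix with $i$-th column $u_i$, let $U=X\Sigma Y$ be its singular value decomposition, and let $\tilde u_i=X\Sigma^{-1}X^\top u_i$. Then for any $\delta\in(0,1]$, for at least a $1-\delta$ fraction of $i\in[k]$, $\langle u_i,\tilde u_i\rangle\ge 1-\epsilon/(2\delta)$.
   Context: The singular value decomposition is the compact one: $X$ is $d\times k$ with orthonormal columns, $\Sigma$ is $k\times k$ diagonal with positive entries (so $U$ is assumed to have full column rank), and $Y$ is $k\times k$ orthogonal. *)

theory Defs
  imports "HOL-Analysis.Analysis"
begin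

end

theory Submission
  imports Defs
begin

lemma col_mult: "column i (A ** B) = A *v column i (B::real^'k^'n)"
  by (simp add: column_def matrix_matrix_mult_def matrix_vector_mult_def vec_eq_iff)

lemma isom_inner:
  fixes X :: "real^'k^'d"
  assumes "transpose X ** X = mat 1"
  shows "(X *v w) \<bullet> (X *v v) = w \<bullet> v"
proof -
  have "(X *v w) \<bullet> (X *v v) = ((X *v w) v* X) \<bullet> v"
    by (simp add: dot_lmul_matrix)
  also have "(X *v w) v* X = w"
    by (metis transpose_matrix_vector matrix_vector_mul_assoc assms matrix_vector_mul_lid)
  finally show ?thesis .
qed

lemma diag_mult:
  fixes S :: "real^'k^'k"
  assumes "\<forall>i j. i \<noteq> j \<longrightarrow> S $ i $ j = 0"
  shows "(S *v v) $ j = S$j$j * v$j"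
proof -
  have "(S *v v) $ j = (\<Sum>l\<in>UNIV. S$j$l * v$l)" by (simp add: matrix_vector_mult_def)
  also have "\<dots> = S$j$j * v$j"
    by (subst sum.remove[of UNIV j]) (use assms in \<open>auto intro!: sum.neutral\<close>)
  finally show ?thesis .
qed

theorem mainTheorem11:
  fixes a u :: "'k::finite \<Rightarrow> real^'d"
    and U X :: "real^'k^'d"
    and Sigma Y :: "real^'k^'k"
    and \<epsilon> \<delta> :: real
  assumes orthonormal_a: "\<forall>i j. a i \<bullet> a j = (if i = j then 1 else 0)"
    and unit_u: "\<forall>i. norm (u i) = 1"
    and close: "\<forall>i. (norm (u i - a i))\<^sup>2 \<le> \<epsilon>"
    and U_cols: "\<forall>i. column i U = u i"
    and X_orth_cols: "transpose X ** X = mat 1"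
    and Sigma_diag: "\<forall>i j. i \<noteq> j \<longrightarrow> Sigma $ i $ j = 0"
    and Sigma_pos: "\<forall>i. Sigma $ i $ i > 0"
    and Y_orth: "orthogonal_matrix Y"
    and svd: "U = X ** Sigma ** Y"
    and delta: "0 < \<delta>" "\<delta> \<le> 1"
  shows "real (card {i. u i \<bullet> ((X ** matrix_inv Sigma ** transpose X) *v u i) \<ge> 1 - \<epsilon> / (2 * \<delta>)})
           \<ge> (1 - \<delta>) * real CARD('k)"
proof -
  define s where "s j = Sigma$j$j" for j
  define y where "y i = column i Y" for i
  define w where "w i = Sigma *v y i" for i
  define t where "t i = w i \<bullet> y i" for i
  have u_eq: "u i = X *v w i" for i
    using U_cols svd by (metis col_mult matrix_mul_assoc w_def y_def)
  define D :: "real^'k^'k" where "D = (\<chi> i j. if i = j then 1 / s i else 0)"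
  have SD: "Sigma ** D = mat 1"
  proof -
    have "(Sigma ** D)$i$j = mat 1 $ i $ j" for i j
    proof -
      have "(Sigma ** D)$i$j = (\<Sum>l\<in>UNIV. Sigma$i$l * D$l$j)"
        by (simp add: matrix_matrix_mult_def)
      also have "\<dots> = Sigma$i$i * D$i$j"
        by (subst sum.remove[of UNIV i]) (use Sigma_diag in \<open>auto intro!: sum.neutral\<close>)
      also have "\<dots> = mat 1 $ i $ j"
        using Sigma_pos[rule_format, of i] by (auto simp: D_def s_def mat_def)
      finally show ?thesis .
    qed
    then show ?thesis by (simp add: vec_eq_iff)
  qed
  have "invertible Sigma"
    using SD invertible_right_inverse by blast
  then have "\<exists>A'. Sigma ** A' = mat 1 \<and> A' ** Sigma = mat 1"
    by (simp add: invertible_def)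
  then have Sinv: "matrix_inv Sigma ** Sigma = mat 1"
    unfolding matrix_inv_def by (rule someI2_ex) blast
  have SinvV: "matrix_inv Sigma *v (Sigma *v v) = v" for v
    by (simp add: matrix_vector_mul_assoc Sinv)
  have XtX: "transpose X *v (X *v v) = v" for v
    by (simp add: matrix_vector_mul_assoc X_orth_cols)
  have term_eq: "u i \<bullet> ((X ** matrix_inv Sigma ** transpose X) *v u i) = t i" for i
  proof -
    have "(X ** matrix_inv Sigma ** transpose X) *v u i = X *v (matrix_inv Sigma *v (transpose X *v u i))"
      by (metis matrix_vector_mul_assoc matrix_mul_assoc)
    also have "\<dots> = X *v y i"
      using SinvV by (simp only: u_eq XtX w_def)
    finally show ?thesis
      using isom_inner[OF X_orth_cols] by (simp add: u_eq t_def)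
  qed
  have ynorm: "norm (y i) = 1" for i
    using Y_orth unfolding orthogonal_matrix_orthonormal_columns y_def by blast
  have wnorm: "norm (w i) = 1" for i
  proof -
    have "u i \<bullet> u i = 1" using unit_u by (simp add: norm_eq_1)
    moreover have "u i \<bullet> u i = w i \<bullet> w i"
      using isom_inner[OF X_orth_cols] u_eq by simp
    ultimately have "w i \<bullet> w i = 1" by simp
    then show ?thesis by (simp add: norm_eq_1)
  qed
  have t_le: "t i \<le> 1" for i
    using norm_cauchy_schwarz[of "w i" "y i"] ynorm wnorm t_def by simp
  have t_expand: "t i = (\<Sum>j\<in>UNIV. s j * (Y$j$i)^2)" for i
    by (simp add: t_def w_def inner_vec_def diag_mult[OF Sigma_diag] s_def y_def column_def power2_eq_square mult.assoc)
  have rows: "(\<Sum>i\<in>UNIV. (Y$j$i)^2) = 1" for j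
  proof -
    have "norm (row j Y) = 1" using Y_orth orthogonal_matrix_orthonormal_rows by blast
    then have "row j Y \<bullet> row j Y = 1" by (simp add: norm_eq_1)
    then show ?thesis by (simp add: inner_vec_def row_def power2_eq_square)
  qed
  have sum_t: "(\<Sum>i\<in>UNIV. t i) = (\<Sum>j\<in>UNIV. s j)"
    by (simp add: t_expand sum.swap[of _ UNIV UNIV] sum_distrib_left[symmetric] rows)
  define x where "x j = column j X" for j
  define b where "b j = (\<Sum>i\<in>UNIV. Y$j$i *\<^sub>R a i)" for j
  have xnorm: "norm (x j) = 1" for j
  proof -
    have "(transpose X ** X)$j$j = 1" using X_orth_cols by (simp add: mat_def)
    then have "x j \<bullet> x j = 1"
      by (simp add: matrix_mult_transpose_dot_column x_def)
    then show ?thesis by (simp add: norm_eq_1)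
  qed
  have bnorm: "norm (b j) = 1" for j
  proof -
    have "b j \<bullet> b j = (\<Sum>i\<in>UNIV. \<Sum>i'\<in>UNIV. Y$j$i * (Y$j$i' * (a i' \<bullet> a i)))"
      by (simp add: b_def inner_sum_left inner_sum_right sum_distrib_left mult.assoc)
    also have "\<dots> = (\<Sum>i\<in>UNIV. (Y$j$i)^2)"
    proof (rule sum.cong[OF refl])
      fix i
      show "(\<Sum>i'\<in>UNIV. Y$j$i * (Y$j$i' * (a i' \<bullet> a i))) = (Y$j$i)^2"
        by (subst sum.remove[of UNIV i]) (use orthonormal_a in \<open>auto intro!: sum.neutral simp: power2_eq_square\<close>)
    qed
    also have "\<dots> = 1" by (rule rows)
    finally show ?thesis by (simp add: norm_eq_1)
  qed
  have au: "a i \<bullet> u i = (\<Sum>j\<in>UNIV. s j * Y$j$i * (a i \<bullet> x j))" for i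
  proof -
    have "a i \<bullet> u i = a i \<bullet> (\<Sum>j\<in>UNIV. (w i $ j) *s x j)"
      unfolding u_eq x_def by (rule arg_cong[where f="\<lambda>v. a i \<bullet> v"], rule matrix_mult_sum)
    also have "\<dots> = (\<Sum>j\<in>UNIV. (w i $ j) * (a i \<bullet> x j))"
      by (simp only: scalar_mult_eq_scaleR inner_sum_right inner_scaleR_right)
    also have "\<dots> = (\<Sum>j\<in>UNIV. s j * Y$j$i * (a i \<bullet> x j))"
      by (simp only: w_def diag_mult[OF Sigma_diag] s_def y_def) (simp add: column_def)
    finally show ?thesis .
  qed
  have sum_au: "(\<Sum>i\<in>UNIV. a i \<bullet> u i) = (\<Sum>j\<in>UNIV. s j * (b j \<bullet> x j))"
  proof -
    have "(\<Sum>i\<in>UNIV. a i \<bullet> u i) = (\<Sum>i\<in>UNIV. \<Sum>j\<in>UNIV. s j * Y$j$i * (a i \<bullet> x j))"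
      by (simp only: au)
    also have "\<dots> = (\<Sum>j\<in>UNIV. \<Sum>i\<in>UNIV. s j * Y$j$i * (a i \<bullet> x j))"
      by (rule sum.swap)
    also have "\<dots> = (\<Sum>j\<in>UNIV. s j * (b j \<bullet> x j))"
      by (simp add: b_def inner_sum_left sum_distrib_left mult.assoc)
    finally show ?thesis .
  qed
  have bx: "s j * (b j \<bullet> x j) \<le> s j" for j
  proof -
    have "b j \<bullet> x j \<le> 1"
      using norm_cauchy_schwarz[of "b j" "x j"] bnorm xnorm by simp
    then show ?thesis using Sigma_pos s_def
      by (metis mult_left_mono mult.right_neutral less_imp_le)
  qed
  have au_ge: "a i \<bullet> u i \<ge> 1 - \<epsilon> / 2" for i
  proof -
    have "(norm (u i - a i))^2 = (u i - a i) \<bullet> (u i - a i)" by (simp add: power2_norm_eq_inner)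
    also have "\<dots> = u i \<bullet> u i - 2 * (a i \<bullet> u i) + a i \<bullet> a i"
      by (simp add: inner_diff_left inner_diff_right inner_commute)
    also have "\<dots> = 2 - 2 * (a i \<bullet> u i)"
      using unit_u orthonormal_a by (simp add: norm_eq_1)
    finally show ?thesis using close[rule_format, of i] by simp
  qed
  define f where "f i = 1 - t i" for i
  have f_nn: "f i \<ge> 0" for i using t_le f_def by simp
  have "(\<Sum>i\<in>(UNIV::'k set). 1 - \<epsilon> / 2) \<le> (\<Sum>i\<in>UNIV. a i \<bullet> u i)"
    by (rule sum_mono) (rule au_ge)
  also have "\<dots> \<le> (\<Sum>j\<in>UNIV. s j)"
    unfolding sum_au by (rule sum_mono) (rule bx)
  finally have "real CARD('k) * (1 - \<epsilon>/2) \<le> (\<Sum>i\<in>UNIV. t i)"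
    using sum_t by simp
  then have sum_f: "(\<Sum>i\<in>UNIV. f i) \<le> real CARD('k) * \<epsilon> / 2"
    by (simp add: f_def sum_subtractf algebra_simps)
  have eps: "\<epsilon> \<ge> 0" using close[rule_format, of undefined] by (meson order_trans zero_le_power2)
  define B where "B = {i. \<not> (t i \<ge> 1 - \<epsilon> / (2 * \<delta>))}"
  have Bf: "i \<in> B \<Longrightarrow> f i > \<epsilon> / (2 * \<delta>)" for i by (simp add: B_def f_def)
  have "(\<Sum>i\<in>B. f i) \<le> (\<Sum>i\<in>UNIV. f i)"
    by (rule sum_mono2) (auto simp: f_nn)
  moreover have "real (card B) * (\<epsilon> / (2 * \<delta>)) \<le> (\<Sum>i\<in>B. f i)"
    using sum_mono[of B "\<lambda>_. \<epsilon> / (2 * \<delta>)" f] Bf by fastforce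
  ultimately have cB: "real (card B) * (\<epsilon> / (2 * \<delta>)) \<le> real CARD('k) * \<epsilon> / 2"
    using sum_f by linarith
  have cardB: "real (card B) \<le> \<delta> * real CARD('k)"
  proof (cases "\<epsilon> = 0")
    case True
    have "B = {}"
    proof (rule ccontr)
      assume "B \<noteq> {}"
      then obtain i where "i \<in> B" by blast
      then have "f i > 0" using Bf True by simp
      moreover have "f i \<le> (\<Sum>i\<in>UNIV. f i)"
        by (rule member_le_sum) (auto simp: f_nn)
      ultimately show False using sum_f True by simp
    qed
    then show ?thesis using delta by simp
  next
    case False
    then have "\<epsilon> > 0" using eps by simp
    then show ?thesis using cB delta
      by (simp add: field_simps)
  qed
  have "{i. u i \<bullet> ((X ** matrix_inv Sigma ** transpose X) *v u i) \<ge> 1 - \<epsilon> / (2 * \<delta>)} = UNIV - B"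
    by (auto simp: term_eq B_def)
  then have "card {i. u i \<bullet> ((X ** matrix_inv Sigma ** transpose X) *v u i) \<ge> 1 - \<epsilon> / (2 * \<delta>)} = CARD('k) - card B"
    by (simp add: card_Diff_subset)
  moreover have "card B \<le> CARD('k)" by (simp add: card_mono)
  ultimately show ?thesis using cardB by (simp add: of_nat_diff algebra_simps)
qed

end
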